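(* Let $G$ be a finite group, $I$ a set, and $H=G^I$. Suppose that $f(a,b)=b$ for some $a,b\in G$ and some homogeneous monomial $f:G^2\to G$, and let $N$ be the normal subgroup of $G$ generated by $b$. Let $(X_m)_{m\in\mathbf{N}}$ be an increasing sequence of subsets of $H$ such that $\mathcal{G}(X_m)\subseteq X_{m+1}$ for all $m$ and $\bigcup_m X_m=H$. Then $N^I\subseteq X_m$ for all $m$ large enough.
   Context: For a subset $X$ of a group, $\mathcal{G}(X)=X\cup\{1\}\cup\{x^{-1}: x\in X\}\cup\{xy : x,y\in X\}$. For $n\in\mathbf{N}$, the set of functions $G^n\to G$ is a group under pointwise multiplication; its elements lying in the subgroup generated by the constant functions and the coordinate projections are called monomials. A monomial $m$ is homogeneous if $m(g_1,\dots,g_n)=1$ whenever at least one $g_i$ equals $1$. *)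

theory Defs
  imports "HOL-Algebra.Algebra"
begin

text \<open>Functions are represented
curried as 'a => 'a => 'a; only their values on carrier G matter.\<close>

inductive_set monomials2 :: "('a, 'b) monoid_scheme \<Rightarrow> ('a \<Rightarrow> 'a \<Rightarrow> 'a) set"
  for G where
  const: "c \<in> carrier G \<Longrightarrow> (\<lambda>x y. c) \<in> monomials2 G"
| proj1: "(\<lambda>x y. x) \<in> monomials2 G"
| proj2: "(\<lambda>x y. y) \<in> monomials2 G"
| one: "(\<lambda>x y. \<one>\<^bsub>G\<^esub>) \<in> monomials2 G"
| mult: "f \<in> monomials2 G \<Longrightarrow> g \<in> monomials2 G \<Longrightarrow>
         (\<lambda>x y. f x y \<otimes>\<^bsub>G\<^esub> g x y) \<in> monomials2 G"
| inv: "f \<in> monomials2 G \<Longrightarrow> (\<lambda>x y. inv\<^bsub>G\<^esub> (f x y)) \<in> monomials2 G"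

definition homogeneous2 :: "('a, 'b) monoid_scheme \<Rightarrow> ('a \<Rightarrow> 'a \<Rightarrow> 'a) \<Rightarrow> bool" where
  "homogeneous2 G f \<longleftrightarrow>
     (\<forall>g1\<in>carrier G. \<forall>g2\<in>carrier G. (g1 = \<one>\<^bsub>G\<^esub> \<or> g2 = \<one>\<^bsub>G\<^esub>) \<longrightarrow> f g1 g2 = \<one>\<^bsub>G\<^esub>)"

definition normal_closure :: "('a, 'b) monoid_scheme \<Rightarrow> 'a \<Rightarrow> 'a set" where
  "normal_closure G b = \<Inter> {N. N \<lhd> G \<and> b \<in> N}"

text \<open>The power group G^I, realised as extensional functions I -> carrier G with
pointwise operations.\<close>
definition pow_carrier :: "('a, 'b) monoid_scheme \<Rightarrow> 'i set \<Rightarrow> ('i \<Rightarrow> 'a) set" where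
  "pow_carrier G I = (\<Pi>\<^sub>E i\<in>I. carrier G)"

definition pow_one :: "('a, 'b) monoid_scheme \<Rightarrow> 'i set \<Rightarrow> 'i \<Rightarrow> 'a" where
  "pow_one G I = (\<lambda>i\<in>I. \<one>\<^bsub>G\<^esub>)"

definition pow_mult :: "('a, 'b) monoid_scheme \<Rightarrow> 'i set \<Rightarrow> ('i \<Rightarrow> 'a) \<Rightarrow> ('i \<Rightarrow> 'a) \<Rightarrow> 'i \<Rightarrow> 'a" where
  "pow_mult G I x y = (\<lambda>i\<in>I. x i \<otimes>\<^bsub>G\<^esub> y i)"

definition pow_inv :: "('a, 'b) monoid_scheme \<Rightarrow> 'i set \<Rightarrow> ('i \<Rightarrow> 'a) \<Rightarrow> 'i \<Rightarrow> 'a" where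
  "pow_inv G I x = (\<lambda>i\<in>I. inv\<^bsub>G\<^esub> (x i))"

definition gstep :: "('a, 'b) monoid_scheme \<Rightarrow> 'i set \<Rightarrow> ('i \<Rightarrow> 'a) set \<Rightarrow> ('i \<Rightarrow> 'a) set" where
  "gstep G I S = S \<union> {pow_one G I} \<union> (\<lambda>x. pow_inv G I x) ` S \<union> {z. \<exists>x\<in>S. \<exists>y\<in>S. z = pow_mult G I x y}"

end

theory Submission
  imports Defs
begin

locale setting = group G for G :: "('a, 'b) monoid_scheme" (structure) +
  fixes I :: "'i set" and f :: "'a \<Rightarrow> 'a \<Rightarrow> 'a" and a b :: 'a
    and Xs :: "nat \<Rightarrow> ('i \<Rightarrow> 'a) set"
  assumes fin: "finite (carrier G)"
    and a_c: "a \<in> carrier G" and b_c: "b \<in> carrier G"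
    and f_mon: "f \<in> monomials2 G" and f_hom: "homogeneous2 G f" and fab: "f a b = b"
    and Xs_sub: "\<And>m. Xs m \<subseteq> pow_carrier G I"
    and Xs_Suc: "\<And>m. Xs m \<subseteq> Xs (Suc m)"
    and Xs_step: "\<And>m. gstep G I (Xs m) \<subseteq> Xs (Suc m)"
    and Xs_Un: "(\<Union>m. Xs m) = pow_carrier G I"
begin

lemma Xs_mono: "m \<le> m' \<Longrightarrow> Xs m \<subseteq> Xs m'"
  by (rule lift_Suc_mono_le[of Xs, OF Xs_Suc])

lemma Xs_monoD: "x \<in> Xs m \<Longrightarrow> m \<le> m' \<Longrightarrow> x \<in> Xs m'"
  using Xs_mono by blast

lemma mult_Xs: "x \<in> Xs m \<Longrightarrow> y \<in> Xs m \<Longrightarrow> pow_mult G I x y \<in> Xs (Suc m)"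
  using Xs_step[of m] unfolding gstep_def by blast

lemma inv_Xs: "x \<in> Xs m \<Longrightarrow> pow_inv G I x \<in> Xs (Suc m)"
  using Xs_step[of m] unfolding gstep_def by blast

lemma one_Xs: "pow_one G I \<in> Xs (Suc m)"
  using Xs_step[of m] unfolding gstep_def by blast

lemma mult_Xs2: "x \<in> Xs m \<Longrightarrow> y \<in> Xs m' \<Longrightarrow> pow_mult G I x y \<in> Xs (Suc (max m m'))"
  by (rule mult_Xs; erule Xs_monoD; simp)

lemma ex_level: "x \<in> pow_carrier G I \<Longrightarrow> \<exists>m. x \<in> Xs m"
  using Xs_Un by blast

lemma Xs_ext: "x \<in> Xs m \<Longrightarrow> x \<in> extensional I"
  using Xs_sub[of m] unfolding pow_carrier_def by (auto simp: PiE_def)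

lemma Xs_car: "x \<in> Xs m \<Longrightarrow> i \<in> I \<Longrightarrow> x i \<in> carrier G"
  using Xs_sub[of m] unfolding pow_carrier_def by (auto simp: PiE_def)

definition pat :: "'a \<Rightarrow> 'i set \<Rightarrow> 'i \<Rightarrow> 'a" where
  "pat g S = (\<lambda>i\<in>I. if i \<in> S then g else \<one>\<^bsub>G\<^esub>)"

lemma pat_car: "g \<in> carrier G \<Longrightarrow> pat g S \<in> pow_carrier G I"
  unfolding pat_def pow_carrier_def by auto

lemma const_level: "c \<in> carrier G \<Longrightarrow> \<exists>m. (\<lambda>i\<in>I. c) \<in> Xs m"
  by (rule ex_level) (auto simp: pow_carrier_def)

lemma monomial_level:
  assumes "h \<in> monomials2 G"
  shows "\<exists>d L0. \<forall>L\<ge>L0. \<forall>x y. x \<in> Xs L \<longrightarrow> y \<in> Xs L \<longrightarrow> (\<lambda>i\<in>I. h (x i) (y i)) \<in> Xs (L + d)"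
  using assms
proof induction
  case (const c)
  then obtain m where m: "(\<lambda>i\<in>I. c) \<in> Xs m" using const_level by blast
  show ?case
  proof (rule exI[of _ 0], rule exI[of _ m], intro allI impI)
    fix L x y assume "m \<le> L"
    then show "(\<lambda>i\<in>I. (\<lambda>x y. c) (x i) (y i)) \<in> Xs (L + 0)"
      using Xs_monoD[OF m] by simp
  qed
next
  case proj1
  show ?case
  proof (rule exI[of _ 0], rule exI[of _ 0], intro allI impI)
    fix L x y assume "x \<in> Xs L" "y \<in> Xs L"
    then show "(\<lambda>i\<in>I. (\<lambda>x y. x) (x i) (y i)) \<in> Xs (L + 0)"
      using extensional_restrict[OF Xs_ext] by simp
  qed
next
  case proj2
  show ?case
  proof (rule exI[of _ 0], rule exI[of _ 0], intro allI impI)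
    fix L x y assume "x \<in> Xs L" "y \<in> Xs L"
    then show "(\<lambda>i\<in>I. (\<lambda>x y. y) (x i) (y i)) \<in> Xs (L + 0)"
      using extensional_restrict[OF Xs_ext] by simp
  qed
next
  case one
  show ?case
  proof (rule exI[of _ 1], rule exI[of _ 0], intro allI impI)
    fix L x y
    show "(\<lambda>i\<in>I. (\<lambda>x y. \<one>\<^bsub>G\<^esub>) (x i) (y i)) \<in> Xs (L + 1)"
      using one_Xs[of L] by (simp add: pow_one_def)
  qed
next
  case (mult h1 h2)
  from mult.IH obtain d1 L1 d2 L2 where
    h1: "\<forall>L\<ge>L1. \<forall>x y. x \<in> Xs L \<longrightarrow> y \<in> Xs L \<longrightarrow> (\<lambda>i\<in>I. h1 (x i) (y i)) \<in> Xs (L + d1)" and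
    h2: "\<forall>L\<ge>L2. \<forall>x y. x \<in> Xs L \<longrightarrow> y \<in> Xs L \<longrightarrow> (\<lambda>i\<in>I. h2 (x i) (y i)) \<in> Xs (L + d2)"
    by blast
  show ?case
  proof (rule exI[of _ "Suc (max d1 d2)"], rule exI[of _ "max L1 L2"], intro allI impI)
    fix L x y assume L: "max L1 L2 \<le> L" and x: "x \<in> Xs L" and y: "y \<in> Xs L"
    have 1: "(\<lambda>i\<in>I. h1 (x i) (y i)) \<in> Xs (L + max d1 d2)"
      using h1 L x y by (meson Xs_monoD add_le_mono le_refl max.cobounded1 max.boundedE)
    have 2: "(\<lambda>i\<in>I. h2 (x i) (y i)) \<in> Xs (L + max d1 d2)"
      using h2 L x y by (meson Xs_monoD add_le_mono le_refl max.cobounded2 max.boundedE)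
    have "pow_mult G I (\<lambda>i\<in>I. h1 (x i) (y i)) (\<lambda>i\<in>I. h2 (x i) (y i)) \<in> Xs (Suc (L + max d1 d2))"
      by (rule mult_Xs[OF 1 2])
    moreover have "pow_mult G I (\<lambda>i\<in>I. h1 (x i) (y i)) (\<lambda>i\<in>I. h2 (x i) (y i))
       = (\<lambda>i\<in>I. h1 (x i) (y i) \<otimes> h2 (x i) (y i))"
      by (auto simp: pow_mult_def)
    ultimately show "(\<lambda>i\<in>I. h1 (x i) (y i) \<otimes> h2 (x i) (y i)) \<in> Xs (L + Suc (max d1 d2))"
      by simp
  qed
next
  case (inv h1)
  from inv.IH obtain d1 L1 where
    h1: "\<forall>L\<ge>L1. \<forall>x y. x \<in> Xs L \<longrightarrow> y \<in> Xs L \<longrightarrow> (\<lambda>i\<in>I. h1 (x i) (y i)) \<in> Xs (L + d1)"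
    by blast
  show ?case
  proof (rule exI[of _ "Suc d1"], rule exI[of _ L1], intro allI impI)
    fix L x y assume L: "L1 \<le> L" and x: "x \<in> Xs L" and y: "y \<in> Xs L"
    have "pow_inv G I (\<lambda>i\<in>I. h1 (x i) (y i)) \<in> Xs (Suc (L + d1))"
      using h1 L x y by (auto intro: inv_Xs)
    moreover have "pow_inv G I (\<lambda>i\<in>I. h1 (x i) (y i)) = (\<lambda>i\<in>I. inv (h1 (x i) (y i)))"
      by (auto simp: pow_inv_def)
    ultimately show "(\<lambda>i\<in>I. inv (h1 (x i) (y i))) \<in> Xs (L + Suc d1)" by simp
  qed
qed


lemma pat_Un: "S \<inter> S' = {} \<Longrightarrow> g \<in> carrier G \<Longrightarrow> pow_mult G I (pat g S) (pat g S') = pat g (S \<union> S')"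
  unfolding pow_mult_def pat_def by (rule ext) auto

lemma pat_diff: "S \<subseteq> R \<Longrightarrow> g \<in> carrier G \<Longrightarrow> pow_mult G I (pat g R) (pow_inv G I (pat g S)) = pat g (R - S)"
  unfolding pow_mult_def pow_inv_def pat_def by (rule ext) auto

definition lv :: "'i set \<Rightarrow> nat" where
  "lv S = (LEAST m. pat b S \<in> Xs m)"

lemma lv_in: "pat b S \<in> Xs (lv S)"
proof -
  obtain m where "pat b S \<in> Xs m" using ex_level[OF pat_car[OF b_c]] by blast
  then show ?thesis unfolding lv_def by (rule LeastI)
qed

lemma lv_le: "pat b S \<in> Xs m \<Longrightarrow> lv S \<le> m"
  unfolding lv_def by (rule Least_le)

lemma lv_in': "lv S \<le> m \<Longrightarrow> pat b S \<in> Xs m"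
  using lv_in Xs_monoD by blast

lemma lv_Un: "S \<inter> S' = {} \<Longrightarrow> lv (S \<union> S') \<le> Suc (max (lv S) (lv S'))"
  using mult_Xs2[OF lv_in[of S] lv_in[of S']] pat_Un[OF _ b_c] lv_le by metis

lemma lv_diff: "S \<subseteq> R \<Longrightarrow> lv (R - S) \<le> Suc (Suc (max (lv R) (lv S)))"
proof -
  assume S: "S \<subseteq> R"
  have "pow_mult G I (pat b R) (pow_inv G I (pat b S)) \<in> Xs (Suc (max (lv R) (Suc (lv S))))"
    by (rule mult_Xs2[OF lv_in inv_Xs[OF lv_in]])
  then have "lv (R - S) \<le> Suc (max (lv R) (Suc (lv S)))"
    using pat_diff[OF S b_c] lv_le by metis
  then show ?thesis by simp
qed

lemma lv_diff2: "S \<subseteq> R \<Longrightarrow> lv S \<le> Suc (Suc (max (lv R) (lv (R - S))))"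
  using lv_diff[of "R - S" R] by (simp add: Diff_Diff_Int Int_absorb1)

lemma lv_split: "lv C \<le> Suc (max (lv (C - F)) (lv (C \<inter> F)))"
proof -
  have "C = (C - F) \<union> (C \<inter> F)" by blast
  then show ?thesis using lv_Un[of "C - F" "C \<inter> F"] by (metis Diff_disjoint Int_Diff_disjoint inf_commute)
qed

definition good :: "'i set \<Rightarrow> bool" where
  "good C \<longleftrightarrow> (\<exists>n. \<forall>T\<subseteq>C. lv T \<le> n)"

lemma good_sub: "good C \<Longrightarrow> D \<subseteq> C \<Longrightarrow> good D"
  unfolding good_def by (meson order_trans)

lemma good_Un: "good C \<Longrightarrow> good D \<Longrightarrow> good (C \<union> D)"
proof -
  assume "good C" "good D"
  then obtain n1 n2 where n1: "\<forall>T\<subseteq>C. lv T \<le> n1" and n2: "\<forall>T\<subseteq>D. lv T \<le> n2"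
    unfolding good_def by blast
  show ?thesis unfolding good_def
  proof (rule exI[of _ "Suc (max n1 n2)"], intro allI impI)
    fix T assume T: "T \<subseteq> C \<union> D"
    have "lv T \<le> Suc (max (lv (T - C)) (lv (T \<inter> C)))" by (rule lv_split)
    moreover have "lv (T - C) \<le> n2" using n2 T by (metis Diff_subset_conv sup_commute)
    moreover have "lv (T \<inter> C) \<le> n1" using n1 by auto
    ultimately show "lv T \<le> Suc (max n1 n2)" by simp
  qed
qed


lemma unb_good:
  assumes bad: "\<not> good R" and ns: "\<forall>P\<subseteq>R. good P \<or> good (R - P)"
  shows "\<exists>C\<subseteq>R. good C \<and> n < lv C"
proof -
  from bad obtain S where S: "S \<subseteq> R" "\<not> lv S \<le> Suc (Suc (max (lv R) n))"
    unfolding good_def by blast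
  show ?thesis
  proof (cases "good S")
    case True then show ?thesis using S by auto
  next
    case False
    then have g: "good (R - S)" using ns S by blast
    have "lv S \<le> Suc (Suc (max (lv R) (lv (R - S))))" by (rule lv_diff2[OF S(1)])
    then have "n < lv (R - S)" using S(2) by linarith
    then show ?thesis using g by blast
  qed
qed

lemma avoid_good:
  assumes bad: "\<not> good R" and ns: "\<forall>P\<subseteq>R. good P \<or> good (R - P)" and F: "good F"
  shows "\<exists>C\<subseteq>R - F. good C \<and> n < lv C"
proof -
  from F obtain nF where nF: "\<forall>T\<subseteq>F. lv T \<le> nF" unfolding good_def by blast
  obtain C' where C': "C' \<subseteq> R" "good C'" "Suc (max n nF) < lv C'"
    using unb_good[OF bad ns] by blast
  have "lv C' \<le> Suc (max (lv (C' - F)) (lv (C' \<inter> F)))" by (rule lv_split)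
  moreover have "lv (C' \<inter> F) \<le> nF" using nF by auto
  ultimately have "n < lv (C' - F)" using C'(3) by linarith
  moreover have "good (C' - F)" using good_sub[OF C'(2)] by blast
  moreover have "C' - F \<subseteq> R - F" using C'(1) by blast
  ultimately show ?thesis by blast
qed

lemma step:
  assumes bad: "\<not> good R"
  shows "\<exists>D\<subseteq>R. \<not> good (R - D) \<and> (\<exists>T\<subseteq>D. lv D + K < lv T)"
proof (rule ccontr)
  assume "\<not> ?thesis"
  then have H: "\<And>D T. D \<subseteq> R \<Longrightarrow> \<not> good (R - D) \<Longrightarrow> T \<subseteq> D \<Longrightarrow> lv T \<le> lv D + K"
    by (meson not_le)
  show False
  proof (cases "\<exists>P\<subseteq>R. \<not> good P \<and> \<not> good (R - P)")
    case True
    then obtain P where P: "P \<subseteq> R" "\<not> good P" "\<not> good (R - P)" by blast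
    have "good P" unfolding good_def using H[OF P(1) P(3)] by blast
    with P show False by blast
  next
    case False
    then have ns: "\<forall>P\<subseteq>R. good P \<or> good (R - P)" by blast
    have goodD: "\<And>D T. D \<subseteq> R \<Longrightarrow> good D \<Longrightarrow> T \<subseteq> D \<Longrightarrow> lv T \<le> lv D + K"
    proof -
      fix D T assume D: "D \<subseteq> R" "good D" "T \<subseteq> D"
      have "\<not> good (R - D)"
      proof
        assume "good (R - D)"
        then have "good (D \<union> (R - D))" using good_Un D(2) by blast
        moreover have "D \<union> (R - D) = R" using D(1) by blast
        ultimately show False using bad by simp
      qed
      then show "lv T \<le> lv D + K" using H D by blast
    qed
    define Cnew where "Cnew = (\<lambda>F j. SOME C. C \<subseteq> R - F \<and> good C \<and> j + K < lv C)"
    define Fs where "Fs = rec_nat {} (\<lambda>j F. F \<union> Cnew F j)"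
    have Fs0: "Fs 0 = {}" and FsS: "\<And>j. Fs (Suc j) = Fs j \<union> Cnew (Fs j) j"
      unfolding Fs_def by simp_all
    have Cspec: "\<And>F j. good F \<Longrightarrow> Cnew F j \<subseteq> R - F \<and> good (Cnew F j) \<and> j + K < lv (Cnew F j)"
    proof -
      fix F j assume "good F"
      from avoid_good[OF bad ns this, of "j + K"]
      show "Cnew F j \<subseteq> R - F \<and> good (Cnew F j) \<and> j + K < lv (Cnew F j)"
        unfolding Cnew_def by (rule someI_ex)
    qed
    have Fgood: "good (Fs j)" for j
    proof (induction j)
      case 0 then show ?case by (auto simp add: Fs0 good_def)
    next
      case (Suc j) then show ?case using FsS Cspec good_Un by metis
    qed
    define Cs where "Cs = (\<lambda>j. Cnew (Fs j) j)"
    have CsR: "Cs j \<subseteq> R - Fs j" and Csg: "good (Cs j)" and Cslv: "j + K < lv (Cs j)" for j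
      using Cspec[OF Fgood[of j]] unfolding Cs_def by auto
    have Fs_mono: "Fs i \<subseteq> Fs j" if "i \<le> j" for i j
      using that
    proof (induction j)
      case 0 then show ?case by simp
    next
      case (Suc j) then show ?case using FsS by (auto simp: le_Suc_eq)
    qed
    have Cs_in_Fs: "Cs i \<subseteq> Fs j" if "i < j" for i j
      using Fs_mono[of "Suc i" j] that FsS[of i] unfolding Cs_def by auto
    have Cs_disj: "Cs i \<inter> Cs j = {}" if "i \<noteq> j" for i j
    proof (cases "i < j")
      case True then show ?thesis using Cs_in_Fs[OF True] CsR[of j] by blast
    next
      case False then have "j < i" using that by simp
      then show ?thesis using Cs_in_Fs CsR[of i] by blast
    qed
    define We where "We = (\<Union>j. Cs (2 * j))"
    define Wo where "Wo = (\<Union>j. Cs (Suc (2 * j)))"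
    have WeR: "We \<subseteq> R" and WoR: "Wo \<subseteq> R" using CsR unfolding We_def Wo_def by blast+
    have WeWo: "Wo \<subseteq> R - We"
    proof
      fix x assume x: "x \<in> Wo"
      then obtain j where j: "x \<in> Cs (Suc (2 * j))" unfolding Wo_def by blast
      have "x \<notin> Cs (2 * k)" for k
      proof -
        have "Suc (2 * j) \<noteq> 2 * k" by presburger
        then show ?thesis using Cs_disj j by blast
      qed
      then show "x \<in> R - We" using x WoR unfolding We_def by blast
    qed
    show False
    proof (cases "good We")
      case True
      have "lv (Cs (2 * lv We)) \<le> lv We + K"
        by (rule goodD[OF WeR True]) (auto simp: We_def)
      moreover have "2 * lv We + K < lv (Cs (2 * lv We))" by (rule Cslv)
      ultimately show False by linarith
    next
      case False
      then have "good (R - We)" using ns WeR by blast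
      then have gWo: "good Wo" using good_sub WeWo by blast
      have "lv (Cs (Suc (2 * lv Wo))) \<le> lv Wo + K"
        by (rule goodD[OF WoR gWo]) (auto simp: Wo_def)
      moreover have "Suc (2 * lv Wo) + K < lv (Cs (Suc (2 * lv Wo)))" by (rule Cslv)
      ultimately show False by linarith
    qed
  qed
qed


lemma f_one1: "x \<in> carrier G \<Longrightarrow> f x \<one> = \<one>"
  using f_hom unfolding homogeneous2_def by blast

lemma f_one2: "y \<in> carrier G \<Longrightarrow> f \<one> y = \<one>"
  using f_hom unfolding homogeneous2_def by blast

lemma good_UNIV: "good UNIV"
proof (rule ccontr)
  assume bad0: "\<not> good UNIV"
  obtain d L0 where dL: "\<And>L x y. L0 \<le> L \<Longrightarrow> x \<in> Xs L \<Longrightarrow> y \<in> Xs L \<Longrightarrow> (\<lambda>i\<in>I. f (x i) (y i)) \<in> Xs (L + d)"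
    using monomial_level[OF f_mon] by blast
  define P where "P = (\<lambda>R j DT. fst DT \<subseteq> R \<and> \<not> good (R - fst DT) \<and> snd DT \<subseteq> fst DT \<and> lv (fst DT) + (j + L0 + d) < lv (snd DT))"
  define sel where "sel = (\<lambda>R j. SOME DT. P R j DT)"
  have sel: "\<not> good R \<Longrightarrow> P R j (sel R j)" for R j
  proof -
    assume "\<not> good R"
    from step[OF this, of "j + L0 + d"] obtain D T where "P R j (D, T)" unfolding P_def by auto
    then show ?thesis unfolding sel_def by (rule someI)
  qed
  define Rs where "Rs = rec_nat UNIV (\<lambda>j R. R - fst (sel R j))"
  have Rs0: "Rs 0 = UNIV" and RsS: "\<And>j. Rs (Suc j) = Rs j - fst (sel (Rs j) j)"
    unfolding Rs_def by simp_all
  have Rbad: "\<not> good (Rs j)" for j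
  proof (induction j)
    case 0 then show ?case using bad0 Rs0 by simp
  next
    case (Suc j) then show ?case using sel[OF Suc] RsS unfolding P_def by simp
  qed
  define Ds where "Ds = (\<lambda>j. fst (sel (Rs j) j))"
  define Ts where "Ts = (\<lambda>j. snd (sel (Rs j) j))"
  have DsR: "Ds j \<subseteq> Rs j" and TsD: "Ts j \<subseteq> Ds j" and lvT: "lv (Ds j) + (j + L0 + d) < lv (Ts j)" for j
    using sel[OF Rbad[of j]] unfolding P_def Ds_def Ts_def by auto
  have Rs_anti: "Rs j \<subseteq> Rs i" if "i \<le> j" for i j
    using that
  proof (induction j)
    case 0 then show ?case by simp
  next
    case (Suc j) then show ?case using RsS by (auto simp: le_Suc_eq)
  qed
  have Ds_disj: "Ds i \<inter> Ds j = {}" if "i < j" for i j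
  proof -
    have "Ds j \<subseteq> Rs (Suc i)" using DsR[of j] Rs_anti[of "Suc i" j] that by auto
    then show ?thesis using RsS[of i] unfolding Ds_def by auto
  qed
  define U where "U = (\<Union>j. Ts j)"
  obtain M where yM: "pat a U \<in> Xs M" using ex_level[OF pat_car[OF a_c]] by blast
  define L where "L = max (max M (lv (Ds M))) L0"
  have y: "pat a U \<in> Xs L" using yM Xs_monoD unfolding L_def by simp
  have z: "pat b (Ds M) \<in> Xs L" using lv_in' unfolding L_def by simp
  have fz: "(\<lambda>i\<in>I. f (pat a U i) (pat b (Ds M) i)) \<in> Xs (L + d)"
    using dL[OF _ y z] unfolding L_def by simp
  have eq: "(\<lambda>i\<in>I. f (pat a U i) (pat b (Ds M) i)) = pat b (Ts M)"
  proof (rule ext)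
    fix i
    show "(\<lambda>i\<in>I. f (pat a U i) (pat b (Ds M) i)) i = pat b (Ts M) i"
    proof (cases "i \<in> I")
      case False then show ?thesis by (simp add: pat_def)
    next
      case iI: True
      show ?thesis
      proof (cases "i \<in> Ds M")
        case False
        then have "i \<notin> Ts M" using TsD by blast
        moreover have "pat a U i \<in> carrier G" using iI a_c by (simp add: pat_def)
        ultimately show ?thesis using False iI f_one1 by (simp add: pat_def)
      next
        case iD: True
        show ?thesis
        proof (cases "i \<in> Ts M")
          case True
          then show ?thesis using iD iI fab by (auto simp add: pat_def U_def)
        next
          case False
          have "i \<notin> Ts j" for j
          proof (cases "j = M")
            case True then show ?thesis using False by simp
          next
            case False
            then have "Ds j \<inter> Ds M = {}" using Ds_disj by (metis inf_commute nat_neq_iff)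
            then show ?thesis using iD TsD[of j] by blast
          qed
          then have "i \<notin> U" unfolding U_def by blast
          then show ?thesis using False iD iI f_one2 b_c by (simp add: pat_def)
        qed
      qed
    qed
  qed
  have "lv (Ts M) \<le> L + d" using fz eq lv_le by simp
  moreover have "L \<le> M + lv (Ds M) + L0" unfolding L_def by simp
  ultimately show False using lvT[of M] by linarith
qed


definition Q :: "'a set" where
  "Q = {g \<in> carrier G. \<exists>k. \<forall>S. pat g S \<in> Xs k}"

lemma pat_mult: "g \<in> carrier G \<Longrightarrow> h \<in> carrier G \<Longrightarrow> pow_mult G I (pat g S) (pat h S) = pat (g \<otimes> h) S"
  unfolding pow_mult_def pat_def by (rule ext) auto

lemma pat_inv: "g \<in> carrier G \<Longrightarrow> pow_inv G I (pat g S) = pat (inv g) S"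
  unfolding pow_inv_def pat_def by (rule ext) auto

lemma pat_conj: "x \<in> carrier G \<Longrightarrow> g \<in> carrier G \<Longrightarrow>
   pow_mult G I (pow_mult G I (\<lambda>i\<in>I. x) (pat g S)) (\<lambda>i\<in>I. inv x) = pat (x \<otimes> g \<otimes> inv x) S"
  unfolding pow_mult_def pat_def by (rule ext) auto

lemma pat_one: "pat \<one> S = pow_one G I"
  unfolding pat_def pow_one_def by (rule ext) auto

lemma Q_one: "\<one> \<in> Q"
  unfolding Q_def using one_Xs[of 0] pat_one by auto

lemma Q_mult: "g \<in> Q \<Longrightarrow> h \<in> Q \<Longrightarrow> g \<otimes> h \<in> Q"
proof -
  assume "g \<in> Q" "h \<in> Q"
  then obtain k1 k2 where g: "g \<in> carrier G" "\<forall>S. pat g S \<in> Xs k1" and h: "h \<in> carrier G" "\<forall>S. pat h S \<in> Xs k2"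
    unfolding Q_def by blast
  have "\<forall>S. pat (g \<otimes> h) S \<in> Xs (Suc (max k1 k2))"
  proof
    fix S show "pat (g \<otimes> h) S \<in> Xs (Suc (max k1 k2))"
      using mult_Xs2[OF g(2)[rule_format, of S] h(2)[rule_format, of S]] pat_mult[OF g(1) h(1)] by simp
  qed
  then show ?thesis using g h unfolding Q_def by blast
qed

lemma Q_inv: "g \<in> Q \<Longrightarrow> inv g \<in> Q"
proof -
  assume "g \<in> Q"
  then obtain k1 where g: "g \<in> carrier G" "\<forall>S. pat g S \<in> Xs k1"
    unfolding Q_def by blast
  have "\<forall>S. pat (inv g) S \<in> Xs (Suc k1)"
  proof
    fix S show "pat (inv g) S \<in> Xs (Suc k1)"
      using inv_Xs[OF g(2)[rule_format, of S]] pat_inv[OF g(1)] by simp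
  qed
  then show ?thesis using g unfolding Q_def by blast
qed

lemma Q_conj: "x \<in> carrier G \<Longrightarrow> g \<in> Q \<Longrightarrow> x \<otimes> g \<otimes> inv x \<in> Q"
proof -
  assume x: "x \<in> carrier G" and "g \<in> Q"
  then obtain k1 where g: "g \<in> carrier G" "\<forall>S. pat g S \<in> Xs k1"
    unfolding Q_def by blast
  obtain k2 where k2: "(\<lambda>i\<in>I. x) \<in> Xs k2" using const_level x by blast
  obtain k3 where k3: "(\<lambda>i\<in>I. inv x) \<in> Xs k3" using const_level x by blast
  have "\<forall>S. pat (x \<otimes> g \<otimes> inv x) S \<in> Xs (Suc (max (Suc (max k2 k1)) k3))"
  proof
    fix S
    show "pat (x \<otimes> g \<otimes> inv x) S \<in> Xs (Suc (max (Suc (max k2 k1)) k3))"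
      using mult_Xs2[OF mult_Xs2[OF k2 g(2)[rule_format, of S]] k3] pat_conj[OF x g(1)] by simp
  qed
  then show ?thesis using g x unfolding Q_def by blast
qed

lemma Q_normal: "Q \<lhd> G"
proof -
  have "subgroup Q G"
  proof (rule subgroupI)
    show "Q \<subseteq> carrier G" unfolding Q_def by blast
    show "Q \<noteq> {}" using Q_one by blast
  qed (auto intro: Q_inv Q_mult)
  then show ?thesis using Q_conj normal_inv_iff by blast
qed

lemma b_Q: "b \<in> Q"
proof -
  obtain n where "\<forall>T. lv T \<le> n" using good_UNIV unfolding good_def by blast
  then show ?thesis unfolding Q_def using lv_in' b_c by blast
qed

lemma N_Q: "normal_closure G b \<subseteq> Q"
  unfolding normal_closure_def using Q_normal b_Q by blast

lemma Q_car: "Q \<subseteq> carrier G" unfolding Q_def by blast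

lemma uniform_K: "finite A \<Longrightarrow> A \<subseteq> Q \<Longrightarrow> \<exists>K. \<forall>g\<in>A. \<forall>S. pat g S \<in> Xs K"
proof (induction A rule: finite_induct)
  case empty then show ?case by simp
next
  case (insert g A)
  then obtain K where K: "\<forall>g\<in>A. \<forall>S. pat g S \<in> Xs K" by blast
  obtain k where k: "\<forall>S. pat g S \<in> Xs k" using insert.prems unfolding Q_def by blast
  have "\<forall>h\<in>insert g A. \<forall>S. pat h S \<in> Xs (max K k)"
  proof (intro ballI allI)
    fix h S assume "h \<in> insert g A"
    then show "pat h S \<in> Xs (max K k)"
    proof
      assume "h = g" then show ?thesis using Xs_monoD[OF k[rule_format, of S]] by simp
    next
      assume "h \<in> A" then show ?thesis using Xs_monoD[OF K[rule_format, of h S]] by simp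
    qed
  qed
  then show ?case by blast
qed

lemma glue:
  assumes K: "\<forall>g\<in>NN. \<forall>S. pat g S \<in> Xs K" and NN: "NN \<subseteq> carrier G"
  shows "finite A \<Longrightarrow> A \<subseteq> NN \<Longrightarrow> (\<lambda>i\<in>I. if n i \<in> A then n i else \<one>) \<in> Xs (Suc K + card A)"
proof (induction A rule: finite_induct)
  case empty
  have "(\<lambda>i\<in>I. if n i \<in> {} then n i else \<one>) = pat \<one> {}" unfolding pat_def by simp
  moreover have "pat \<one> {} \<in> Xs (Suc K)" using one_Xs[of K] pat_one by simp
  ultimately show ?case by simp
next
  case (insert g A)
  have gc: "g \<in> carrier G" using insert.prems NN by blast
  have gN: "g \<in> NN" using insert.prems by simp
  have 1: "pat g {i. n i = g} \<in> Xs (Suc K + card A)"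
    by (rule Xs_monoD[OF K[rule_format, OF gN]]) simp
  have 2: "(\<lambda>i\<in>I. if n i \<in> A then n i else \<one>) \<in> Xs (Suc K + card A)"
    using insert.prems by (intro insert.IH) simp
  have "pow_mult G I (pat g {i. n i = g}) (\<lambda>i\<in>I. if n i \<in> A then n i else \<one>)
      = (\<lambda>i\<in>I. if n i \<in> insert g A then n i else \<one>)"
  proof (rule ext)
    fix i
    show "pow_mult G I (pat g {i. n i = g}) (\<lambda>i\<in>I. if n i \<in> A then n i else \<one>) i
      = (\<lambda>i\<in>I. if n i \<in> insert g A then n i else \<one>) i"
    proof (cases "i \<in> I")
      case False then show ?thesis by (simp add: pow_mult_def)
    next
      case True
      show ?thesis
      proof (cases "n i = g")
        case True then show ?thesis using \<open>i \<in> I\<close> insert.hyps gc by (simp add: pow_mult_def pat_def)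
      next
        case False
        have "n i \<in> A \<Longrightarrow> n i \<in> carrier G" using insert.prems NN by blast
        then show ?thesis using \<open>i \<in> I\<close> False by (simp add: pow_mult_def pat_def)
      qed
    qed
  qed
  note eq = this
  have c: "Suc K + card (insert g A) = Suc (Suc K + card A)" using insert.hyps by simp
  show ?case unfolding c eq[symmetric] by (rule mult_Xs[OF 1 2])
qed

lemma final: "\<exists>M. \<forall>m\<ge>M. (\<Pi>\<^sub>E i\<in>I. normal_closure G b) \<subseteq> Xs m"
proof -
  define NN where "NN = normal_closure G b"
  have NNc: "NN \<subseteq> carrier G" using N_Q Q_car NN_def by blast
  have finN: "finite NN" using NNc fin finite_subset by blast
  obtain K where K: "\<forall>g\<in>NN. \<forall>S. pat g S \<in> Xs K" using uniform_K[OF finN] N_Q NN_def by blast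
  show ?thesis
  proof (intro exI allI impI subsetI)
    fix m n assume m: "Suc K + card NN \<le> m" and n: "n \<in> (\<Pi>\<^sub>E i\<in>I. normal_closure G b)"
    have "(\<lambda>i\<in>I. if n i \<in> NN then n i else \<one>) \<in> Xs (Suc K + card NN)"
      by (rule glue[OF K NNc finN subset_refl])
    moreover have "(\<lambda>i\<in>I. if n i \<in> NN then n i else \<one>) = n"
    proof (rule ext)
      fix i show "(\<lambda>i\<in>I. if n i \<in> NN then n i else \<one>) i = n i"
        using n unfolding NN_def by (cases "i \<in> I") (auto simp: PiE_def extensional_def)
    qed
    ultimately show "n \<in> Xs m" using m Xs_monoD by metis
  qed
qed

end

theorem mainTheorem8:
  fixes G :: "('a, 'b) monoid_scheme" and I :: "'i set"
    and f :: "'a \<Rightarrow> 'a \<Rightarrow> 'a" and a b :: 'a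
    and Xs :: "nat \<Rightarrow> ('i \<Rightarrow> 'a) set"
  assumes "group G" and "finite (carrier G)"
    and "a \<in> carrier G" and "b \<in> carrier G"
    and "f \<in> monomials2 G" and "homogeneous2 G f" and "f a b = b"
    and "\<And>m. Xs m \<subseteq> pow_carrier G I"
    and "\<And>m. Xs m \<subseteq> Xs (Suc m)"
    and "\<And>m. gstep G I (Xs m) \<subseteq> Xs (Suc m)"
    and "(\<Union>m. Xs m) = pow_carrier G I"
  shows "\<exists>M. \<forall>m\<ge>M. (\<Pi>\<^sub>E i\<in>I. normal_closure G b) \<subseteq> Xs m"
proof -
  interpret setting G I f a b Xs
  proof (rule setting.intro[OF assms(1)])
    show "setting_axioms G I f a b Xs"
      unfolding setting_axioms_def using assms(2-11) by blast
  qed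
  show ?thesis by (rule final)
qed

end
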